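(* Let $A$ be an approximately unital operator algebra and let $Y$ be an operator space which is also a right $A$-module. Suppose there exist $A$-Hilbertian modules $Y_\alpha$ (indexed by a directed set) and completely contractive right $A$-module maps $\varphi_\alpha:Y\to Y_\alpha$ and $\psi_\alpha:Y_\alpha\to Y$ such that $\psi_\alpha\varphi_\alpha\to I_Y$ strongly on $Y$ (i.e. $\psi_\alpha(\varphi_\alpha(y))\to y$ in norm for each $y\in Y$). Then $Y$ is $A$-Hilbertian.
   Context: An operator algebra is a norm-closed subalgebra of $B(H)$; approximately unital means it has a contractive approximate identity. For a positive integer $n$, $C_n(A)$ denotes the space of $n\times 1$ columns with entries in $A$, with its operator space structure as the first column of $M_n(A)$ and its natural right $A$-module action. An operator space $Y$ which is a right $A$-module is called $A$-Hilbertian if there exist a net of positive integers $n_\alpha$ and completely contractive right $A$-module maps $\varphi_\alpha:Y\to C_{n_\alpha}(A)$ and $\psi_\alpha:C_{n_\alpha}(A)\to Y$ with $\psi_\alpha\varphi_\alpha\to I_Y$ strongly on $Y$. *)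

theory Defs
  imports Complex_Main
begin

text \<open>An n x n matrix over the space is a function
nat => nat => 'v whose entries with indices < n lie in the carrier and which is
zero outside the n x n block.\<close>

record 'v mspace =
  carrier :: "'v set"
  vadd :: "'v \<Rightarrow> 'v \<Rightarrow> 'v"
  vzero :: "'v"
  smul :: "complex \<Rightarrow> 'v \<Rightarrow> 'v"
  mnorm :: "nat \<Rightarrow> (nat \<Rightarrow> nat \<Rightarrow> 'v) \<Rightarrow> real"

record ('v, 'a) rmodule = "'v mspace" + ract :: "'v \<Rightarrow> 'a \<Rightarrow> 'v"

record 'a opalg = "'a mspace" + amul :: "'a \<Rightarrow> 'a \<Rightarrow> 'a"

definition vdiff :: "('v, 'b) mspace_scheme \<Rightarrow> 'v \<Rightarrow> 'v \<Rightarrow> 'v" where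
  "vdiff X x y = vadd X x (smul X (-1) y)"

definition vsum :: "('v, 'b) mspace_scheme \<Rightarrow> nat \<Rightarrow> (nat \<Rightarrow> 'v) \<Rightarrow> 'v" where
  "vsum X n f = foldr (\<lambda>k acc. vadd X (f k) acc) [0..<n] (vzero X)"

definition complex_vs :: "('v, 'b) mspace_scheme \<Rightarrow> bool" where
  "complex_vs X \<longleftrightarrow>
     vzero X \<in> carrier X \<and>
     (\<forall>x\<in>carrier X. \<forall>y\<in>carrier X. vadd X x y \<in> carrier X) \<and>
     (\<forall>c. \<forall>x\<in>carrier X. smul X c x \<in> carrier X) \<and>
     (\<forall>x\<in>carrier X. \<forall>y\<in>carrier X. \<forall>z\<in>carrier X.
         vadd X (vadd X x y) z = vadd X x (vadd X y z)) \<and>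
     (\<forall>x\<in>carrier X. \<forall>y\<in>carrier X. vadd X x y = vadd X y x) \<and>
     (\<forall>x\<in>carrier X. vadd X (vzero X) x = x) \<and>
     (\<forall>x\<in>carrier X. vadd X x (smul X (-1) x) = vzero X) \<and>
     (\<forall>x\<in>carrier X. smul X 1 x = x) \<and>
     (\<forall>a b. \<forall>x\<in>carrier X. smul X a (smul X b x) = smul X (a * b) x) \<and>
     (\<forall>a b. \<forall>x\<in>carrier X. smul X (a + b) x = vadd X (smul X a x) (smul X b x)) \<and>
     (\<forall>a. \<forall>x\<in>carrier X. \<forall>y\<in>carrier X.
         smul X a (vadd X x y) = vadd X (smul X a x) (smul X a y))"

definition mats :: "('v, 'b) mspace_scheme \<Rightarrow> nat \<Rightarrow> (nat \<Rightarrow> nat \<Rightarrow> 'v) set" where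
  "mats X n = {x. \<forall>i j. if i < n \<and> j < n then x i j \<in> carrier X else x i j = vzero X}"

definition zmat :: "('v, 'b) mspace_scheme \<Rightarrow> nat \<Rightarrow> nat \<Rightarrow> 'v" where
  "zmat X = (\<lambda>i j. vzero X)"

definition madd :: "('v, 'b) mspace_scheme \<Rightarrow> (nat \<Rightarrow> nat \<Rightarrow> 'v) \<Rightarrow> (nat \<Rightarrow> nat \<Rightarrow> 'v) \<Rightarrow> nat \<Rightarrow> nat \<Rightarrow> 'v" where
  "madd X x y = (\<lambda>i j. vadd X (x i j) (y i j))"

definition mscale :: "('v, 'b) mspace_scheme \<Rightarrow> complex \<Rightarrow> (nat \<Rightarrow> nat \<Rightarrow> 'v) \<Rightarrow> nat \<Rightarrow> nat \<Rightarrow> 'v" where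
  "mscale X c x = (\<lambda>i j. smul X c (x i j))"

definition cmat_norm :: "nat \<Rightarrow> nat \<Rightarrow> (nat \<Rightarrow> nat \<Rightarrow> complex) \<Rightarrow> real" where
  "cmat_norm n m \<alpha> = Sup {sqrt (\<Sum>i<n. (cmod (\<Sum>j<m. \<alpha> i j * z j))\<^sup>2) | z.
                               (\<Sum>j<m. (cmod (z j))\<^sup>2) \<le> 1}"

definition lrmul :: "('v, 'b) mspace_scheme \<Rightarrow> nat \<Rightarrow> nat \<Rightarrow> (nat \<Rightarrow> nat \<Rightarrow> complex) \<Rightarrow>
    (nat \<Rightarrow> nat \<Rightarrow> 'v) \<Rightarrow> (nat \<Rightarrow> nat \<Rightarrow> complex) \<Rightarrow> nat \<Rightarrow> nat \<Rightarrow> 'v" where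
  "lrmul X n m \<alpha> x \<beta> = (\<lambda>i j. if i < n \<and> j < n then
       vsum X m (\<lambda>k. vsum X m (\<lambda>l. smul X (\<alpha> i k * \<beta> l j) (x k l))) else vzero X)"

definition dsum :: "('v, 'b) mspace_scheme \<Rightarrow> nat \<Rightarrow> nat \<Rightarrow> (nat \<Rightarrow> nat \<Rightarrow> 'v) \<Rightarrow>
    (nat \<Rightarrow> nat \<Rightarrow> 'v) \<Rightarrow> nat \<Rightarrow> nat \<Rightarrow> 'v" where
  "dsum X n m x y = (\<lambda>i j. if i < n \<and> j < n then x i j
       else if n \<le> i \<and> i < n + m \<and> n \<le> j \<and> j < n + m then y (i - n) (j - n)
       else vzero X)"

text \<open>Abstract operator space (Ruan's axioms): each matrix norm is a norm, plus (R1) and (R2).\<close>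
definition operator_space :: "('v, 'b) mspace_scheme \<Rightarrow> bool" where
  "operator_space X \<longleftrightarrow> complex_vs X \<and>
     (\<forall>n\<ge>1. \<forall>x\<in>mats X n. (mnorm X n x = 0 \<longleftrightarrow> x = zmat X)) \<and>
     (\<forall>n\<ge>1. \<forall>x\<in>mats X n. \<forall>y\<in>mats X n. mnorm X n (madd X x y) \<le> mnorm X n x + mnorm X n y) \<and>
     (\<forall>n\<ge>1. \<forall>c. \<forall>x\<in>mats X n. mnorm X n (mscale X c x) = cmod c * mnorm X n x) \<and>
     (\<forall>n\<ge>1. \<forall>m\<ge>1. \<forall>\<alpha> \<beta>. \<forall>x\<in>mats X m.
        mnorm X n (lrmul X n m \<alpha> x \<beta>) \<le> cmat_norm n m \<alpha> * mnorm X m x * cmat_norm m n \<beta>) \<and>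
     (\<forall>n\<ge>1. \<forall>m\<ge>1. \<forall>x\<in>mats X n. \<forall>y\<in>mats X m.
        mnorm X (n + m) (dsum X n m x y) = max (mnorm X n x) (mnorm X m y))"

definition vnorm :: "('v, 'b) mspace_scheme \<Rightarrow> 'v \<Rightarrow> real" where
  "vnorm X v = mnorm X 1 (\<lambda>i j. if i = 0 \<and> j = 0 then v else vzero X)"

definition complete_space_on :: "('v, 'b) mspace_scheme \<Rightarrow> bool" where
  "complete_space_on X \<longleftrightarrow>
     (\<forall>s :: nat \<Rightarrow> 'v. (\<forall>k. s k \<in> carrier X) \<and>
          (\<forall>\<epsilon>>0. \<exists>N. \<forall>p\<ge>N. \<forall>q\<ge>N. vnorm X (vdiff X (s p) (s q)) < \<epsilon>) \<longrightarrow>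
          (\<exists>l\<in>carrier X. \<forall>\<epsilon>>0. \<exists>N. \<forall>p\<ge>N. vnorm X (vdiff X (s p) l) < \<epsilon>))"

definition clinear_map :: "('v, 'b) mspace_scheme \<Rightarrow> ('w, 'c) mspace_scheme \<Rightarrow> ('v \<Rightarrow> 'w) \<Rightarrow> bool" where
  "clinear_map X Z T \<longleftrightarrow>
     (\<forall>x\<in>carrier X. T x \<in> carrier Z) \<and>
     (\<forall>x\<in>carrier X. \<forall>y\<in>carrier X. T (vadd X x y) = vadd Z (T x) (T y)) \<and>
     (\<forall>c. \<forall>x\<in>carrier X. T (smul X c x) = smul Z c (T x))"

definition matmap :: "('w, 'c) mspace_scheme \<Rightarrow> nat \<Rightarrow> ('v \<Rightarrow> 'w) \<Rightarrow> (nat \<Rightarrow> nat \<Rightarrow> 'v) \<Rightarrow> nat \<Rightarrow> nat \<Rightarrow> 'w" where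
  "matmap Z n T x = (\<lambda>i j. if i < n \<and> j < n then T (x i j) else vzero Z)"

definition completely_contractive :: "('v, 'b) mspace_scheme \<Rightarrow> ('w, 'c) mspace_scheme \<Rightarrow> ('v \<Rightarrow> 'w) \<Rightarrow> bool" where
  "completely_contractive X Z T \<longleftrightarrow> clinear_map X Z T \<and>
     (\<forall>n\<ge>1. \<forall>x\<in>mats X n. mnorm Z n (matmap Z n T x) \<le> mnorm X n x)"

definition matprod :: "'a opalg \<Rightarrow> nat \<Rightarrow> (nat \<Rightarrow> nat \<Rightarrow> 'a) \<Rightarrow> (nat \<Rightarrow> nat \<Rightarrow> 'a) \<Rightarrow> nat \<Rightarrow> nat \<Rightarrow> 'a" where
  "matprod A n x y = (\<lambda>i j. if i < n \<and> j < n then vsum A n (\<lambda>k. amul A (x i k) (y k j)) else vzero A)"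

text \<open>Operator algebra, abstractly: a complete operator space with an associative bilinear
completely contractive multiplication (Blecher's characterization of norm-closed subalgebras
of B(H) up to complete isometric isomorphism).\<close>
definition operator_algebra :: "'a opalg \<Rightarrow> bool" where
  "operator_algebra A \<longleftrightarrow> operator_space A \<and> complete_space_on A \<and>
     (\<forall>a\<in>carrier A. \<forall>b\<in>carrier A. amul A a b \<in> carrier A) \<and>
     (\<forall>a\<in>carrier A. \<forall>b\<in>carrier A. \<forall>c\<in>carrier A. amul A (amul A a b) c = amul A a (amul A b c)) \<and>
     (\<forall>a\<in>carrier A. \<forall>b\<in>carrier A. \<forall>c\<in>carrier A.
        amul A a (vadd A b c) = vadd A (amul A a b) (amul A a c) \<and>
        amul A (vadd A a b) c = vadd A (amul A a c) (amul A b c)) \<and>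
     (\<forall>z. \<forall>a\<in>carrier A. \<forall>b\<in>carrier A.
        amul A (smul A z a) b = smul A z (amul A a b) \<and> amul A a (smul A z b) = smul A z (amul A a b)) \<and>
     (\<forall>n\<ge>1. \<forall>x\<in>mats A n. \<forall>y\<in>mats A n. mnorm A n (matprod A n x y) \<le> mnorm A n x * mnorm A n y)"

text \<open>Contractive approximate identity: a net (here a proper filter on A) of elements of
norm at most one with a e -> a and e a -> a in norm for every a.\<close>
definition approx_unital :: "'a opalg \<Rightarrow> bool" where
  "approx_unital A \<longleftrightarrow> (\<exists>F :: 'a filter. F \<noteq> bot \<and>
     eventually (\<lambda>e. e \<in> carrier A \<and> vnorm A e \<le> 1) F \<and>
     (\<forall>a\<in>carrier A. \<forall>\<epsilon>>0. eventually (\<lambda>e.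
        vnorm A (vdiff A (amul A a e) a) < \<epsilon> \<and> vnorm A (vdiff A (amul A e a) a) < \<epsilon>) F))"

definition rmodule_over :: "'a opalg \<Rightarrow> ('y, 'a) rmodule \<Rightarrow> bool" where
  "rmodule_over A Y \<longleftrightarrow> operator_space Y \<and>
     (\<forall>y\<in>carrier Y. \<forall>a\<in>carrier A. ract Y y a \<in> carrier Y) \<and>
     (\<forall>y\<in>carrier Y. \<forall>z\<in>carrier Y. \<forall>a\<in>carrier A. ract Y (vadd Y y z) a = vadd Y (ract Y y a) (ract Y z a)) \<and>
     (\<forall>y\<in>carrier Y. \<forall>a\<in>carrier A. \<forall>b\<in>carrier A. ract Y y (vadd A a b) = vadd Y (ract Y y a) (ract Y y b)) \<and>
     (\<forall>c. \<forall>y\<in>carrier Y. \<forall>a\<in>carrier A.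
        ract Y (smul Y c y) a = smul Y c (ract Y y a) \<and> ract Y y (smul A c a) = smul Y c (ract Y y a)) \<and>
     (\<forall>y\<in>carrier Y. \<forall>a\<in>carrier A. \<forall>b\<in>carrier A. ract Y (ract Y y a) b = ract Y y (amul A a b))"

definition module_map :: "'a opalg \<Rightarrow> ('y, 'a) rmodule \<Rightarrow> ('z, 'a) rmodule \<Rightarrow> ('y \<Rightarrow> 'z) \<Rightarrow> bool" where
  "module_map A Y Z T \<longleftrightarrow> (\<forall>y\<in>carrier Y. \<forall>a\<in>carrier A. T (ract Y y a) = ract Z (T y) a)"

definition cc_module_map :: "'a opalg \<Rightarrow> ('y, 'a) rmodule \<Rightarrow> ('z, 'a) rmodule \<Rightarrow> ('y \<Rightarrow> 'z) \<Rightarrow> bool" where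
  "cc_module_map A Y Z T \<longleftrightarrow> completely_contractive Y Z T \<and> module_map A Y Z T"

text \<open>An m x m matrix X over C_n(A) is normed as the element of M_m(M_n(A)) = M_(mn)(A)
whose (k,l) block is the n x n matrix with first column X k l and zeros elsewhere; row index
k*n+i, column index l*n+j.\<close>
definition col_space :: "'a opalg \<Rightarrow> nat \<Rightarrow> (nat \<Rightarrow> 'a, 'a) rmodule" where
  "col_space A n = \<lparr>
     carrier = {c. \<forall>i. if i < n then c i \<in> carrier A else c i = vzero A},
     vadd = (\<lambda>c d i. vadd A (c i) (d i)),
     vzero = (\<lambda>i. vzero A),
     smul = (\<lambda>z c i. smul A z (c i)),
     mnorm = (\<lambda>m X. mnorm A (m * n) (\<lambda>r s.
        if r < m * n \<and> s < m * n \<and> s mod n = 0 then X (r div n) (s div n) (r mod n) else vzero A)),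
     ract = (\<lambda>c a i. if i < n then amul A (c i) a else vzero A) \<rparr>"

text \<open>A net (n_t, phi_t, psi_t) is represented, as usual in Isabelle, by a proper filter on the
set of triples; "eventually" replaces "for t beyond some index".\<close>
definition hilbertian :: "'a opalg \<Rightarrow> ('y, 'a) rmodule \<Rightarrow> bool" where
  "hilbertian A Y \<longleftrightarrow>
     (\<exists>F :: (nat \<times> ('y \<Rightarrow> nat \<Rightarrow> 'a) \<times> ((nat \<Rightarrow> 'a) \<Rightarrow> 'y)) filter. F \<noteq> bot \<and>
        eventually (\<lambda>(n, \<phi>, \<psi>). n \<ge> 1 \<and> cc_module_map A Y (col_space A n) \<phi> \<and>
                                  cc_module_map A (col_space A n) Y \<psi>) F \<and>
        (\<forall>y\<in>carrier Y. \<forall>\<epsilon>>0. eventually (\<lambda>(n, \<phi>, \<psi>). vnorm Y (vdiff Y (\<psi> (\<phi> y)) y) < \<epsilon>) F))"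

end

theory Submission
  imports Defs
begin

lemma cvs_facts:
  assumes "complex_vs X"
  shows cvs_zero: "vzero X \<in> carrier X"
  and cvs_add: "\<And>x y. x \<in> carrier X \<Longrightarrow> y \<in> carrier X \<Longrightarrow> vadd X x y \<in> carrier X"
  and cvs_smul: "\<And>c x. x \<in> carrier X \<Longrightarrow> smul X c x \<in> carrier X"
  and cvs_assoc: "\<And>x y z. x \<in> carrier X \<Longrightarrow> y \<in> carrier X \<Longrightarrow> z \<in> carrier X \<Longrightarrow>
         vadd X (vadd X x y) z = vadd X x (vadd X y z)"
  and cvs_comm: "\<And>x y. x \<in> carrier X \<Longrightarrow> y \<in> carrier X \<Longrightarrow> vadd X x y = vadd X y x"
  and cvs_lzero: "\<And>x. x \<in> carrier X \<Longrightarrow> vadd X (vzero X) x = x"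
  and cvs_neg: "\<And>x. x \<in> carrier X \<Longrightarrow> vadd X x (smul X (-1) x) = vzero X"
proof -
  note a = assms[unfolded complex_vs_def]
  show "vzero X \<in> carrier X" using a[THEN conjunct1] .
  show "\<And>x y. x \<in> carrier X \<Longrightarrow> y \<in> carrier X \<Longrightarrow> vadd X x y \<in> carrier X"
    using a[THEN conjunct2, THEN conjunct1] by simp
  show "\<And>c x. x \<in> carrier X \<Longrightarrow> smul X c x \<in> carrier X"
    using a[THEN conjunct2, THEN conjunct2, THEN conjunct1] by simp
  show "\<And>x y z. x \<in> carrier X \<Longrightarrow> y \<in> carrier X \<Longrightarrow> z \<in> carrier X \<Longrightarrow>
         vadd X (vadd X x y) z = vadd X x (vadd X y z)"
    using a[THEN conjunct2, THEN conjunct2, THEN conjunct2, THEN conjunct1] by simp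
  show "\<And>x y. x \<in> carrier X \<Longrightarrow> y \<in> carrier X \<Longrightarrow> vadd X x y = vadd X y x"
    using a[THEN conjunct2, THEN conjunct2, THEN conjunct2, THEN conjunct2, THEN conjunct1] by blast
  show "\<And>x. x \<in> carrier X \<Longrightarrow> vadd X (vzero X) x = x"
    using a[THEN conjunct2, THEN conjunct2, THEN conjunct2, THEN conjunct2, THEN conjunct2, THEN conjunct1] by simp
  show "\<And>x. x \<in> carrier X \<Longrightarrow> vadd X x (smul X (-1) x) = vzero X"
    using a[THEN conjunct2, THEN conjunct2, THEN conjunct2, THEN conjunct2, THEN conjunct2, THEN conjunct2, THEN conjunct1] by simp
qed

lemma os_cvs: "operator_space X \<Longrightarrow> complex_vs X"
  unfolding operator_space_def by (rule conjunct1)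

lemma os_tri: "operator_space X \<Longrightarrow>
   \<forall>n\<ge>1. \<forall>x\<in>mats X n. \<forall>y\<in>mats X n. mnorm X n (madd X x y) \<le> mnorm X n x + mnorm X n y"
  unfolding operator_space_def by (erule conjunct2[THEN conjunct2, THEN conjunct1])

lemma rm_os: "rmodule_over A Y \<Longrightarrow> operator_space Y"
  unfolding rmodule_over_def by (rule conjunct1)

lemma cc_parts:
  assumes "cc_module_map A X Z T"
  shows cc_lin: "clinear_map X Z T"
    and cc_cc: "completely_contractive X Z T"
    and cc_mod: "module_map A X Z T"
  using assms unfolding cc_module_map_def completely_contractive_def by simp_all

lemma lin_parts:
  assumes "clinear_map X Z T"
  shows lin_carrier: "\<And>x. x \<in> carrier X \<Longrightarrow> T x \<in> carrier Z"
    and lin_add: "\<And>x y. x \<in> carrier X \<Longrightarrow> y \<in> carrier X \<Longrightarrow> T (vadd X x y) = vadd Z (T x) (T y)"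
    and lin_smul: "\<And>c x. x \<in> carrier X \<Longrightarrow> T (smul X c x) = smul Z c (T x)"
  using assms unfolding clinear_map_def by simp_all

lemma cc_carrier:
  assumes "cc_module_map A X Z T" "x \<in> carrier X"
  shows "T x \<in> carrier Z"
  by (rule lin_carrier[OF cc_lin[OF assms(1)] assms(2)])

lemma smul_closed:
  assumes "complex_vs X" "p \<in> carrier X"
  shows "smul X c p \<in> carrier X"
  by (rule cvs_smul[OF assms])

lemma vdiff_closed:
  assumes "complex_vs X" "p \<in> carrier X" "q \<in> carrier X"
  shows "vdiff X p q \<in> carrier X"
  unfolding vdiff_def by (rule cvs_add[OF assms(1,2) cvs_smul[OF assms(1,3)]])

lemma diff_split:
  assumes cv: "complex_vs X" and "p \<in> carrier X" "q \<in> carrier X" "y \<in> carrier X"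
  shows "vdiff X p y = vadd X (vdiff X p q) (vdiff X q y)"
proof -
  note c = cvs_smul[OF cv] and ad = cvs_add[OF cv] and as = cvs_assoc[OF cv]
  have mq: "smul X (-1) q \<in> carrier X" and my: "smul X (-1) y \<in> carrier X"
    using c assms by auto
  have "vadd X (vdiff X p q) (vdiff X q y)
      = vadd X p (vadd X (smul X (-1) q) (vadd X q (smul X (-1) y)))"
    unfolding vdiff_def using as[OF assms(2) mq ad[OF assms(3) my]] .
  also have "vadd X (smul X (-1) q) (vadd X q (smul X (-1) y))
      = vadd X (vadd X (smul X (-1) q) q) (smul X (-1) y)"
    using as[OF mq assms(3) my] by simp
  also have "vadd X (smul X (-1) q) q = vzero X"
    using cvs_comm[OF cv mq assms(3)] cvs_neg[OF cv assms(3)] by simp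
  also have "vadd X (vzero X) (smul X (-1) y) = smul X (-1) y" by (rule cvs_lzero[OF cv my])
  finally show ?thesis unfolding vdiff_def by simp
qed

lemma vnorm_triangle:
  assumes "operator_space X" "a \<in> carrier X" "b \<in> carrier X"
  shows "vnorm X (vadd X a b) \<le> vnorm X a + vnorm X b"
proof -
  have cv: "complex_vs X" by (rule os_cvs[OF assms(1)])
  let ?m = "\<lambda>v. (\<lambda>i j. if i = 0 \<and> j = 0 then v else vzero X)"
  have tri: "\<forall>x\<in>mats X 1. \<forall>y\<in>mats X 1. mnorm X 1 (madd X x y) \<le> mnorm X 1 x + mnorm X 1 y"
    using os_tri[OF assms(1)] by simp
  have m: "\<And>v. v \<in> carrier X \<Longrightarrow> ?m v \<in> mats X 1" unfolding mats_def by auto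
  have zz: "vadd X (vzero X) (vzero X) = vzero X" by (rule cvs_lzero[OF cv cvs_zero[OF cv]])
  have eq: "madd X (?m a) (?m b) = ?m (vadd X a b)"
    unfolding madd_def using zz by (auto simp: fun_eq_iff)
  have "mnorm X 1 (madd X (?m a) (?m b)) \<le> mnorm X 1 (?m a) + mnorm X 1 (?m b)"
    using tri m[OF assms(2)] m[OF assms(3)] by blast
  then show ?thesis unfolding eq vnorm_def .
qed

lemma cc_vnorm:
  assumes "completely_contractive X Z T" "u \<in> carrier X"
  shows "vnorm Z (T u) \<le> vnorm X u"
proof -
  let ?m = "\<lambda>v. (\<lambda>i j. if i = 0 \<and> j = 0 then v else vzero X)"
  have m: "?m u \<in> mats X 1" unfolding mats_def using assms(2) by auto
  have "matmap Z 1 T (?m u) = (\<lambda>i j. if i = 0 \<and> j = 0 then T u else vzero Z)"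
    unfolding matmap_def by (auto simp: fun_eq_iff)
  moreover have "\<forall>n\<ge>1. \<forall>x\<in>mats X n. mnorm Z n (matmap Z n T x) \<le> mnorm X n x"
    using assms(1) unfolding completely_contractive_def by (rule conjunct2)
  then have "mnorm Z 1 (matmap Z 1 T (?m u)) \<le> mnorm X 1 (?m u)"
    using m by blast
  ultimately show ?thesis unfolding vnorm_def by simp
qed

lemma cc_comp:
  assumes "cc_module_map A X W S" "cc_module_map A W Z T"
  shows "cc_module_map A X Z (T \<circ> S)"
proof -
  have S1: "clinear_map X W S" and S3: "module_map A X W S"
    and T1: "clinear_map W Z T" and T3: "module_map A W Z T"
    using cc_lin cc_mod assms by blast+
  have S2: "\<forall>n\<ge>1. \<forall>x\<in>mats X n. mnorm W n (matmap W n S x) \<le> mnorm X n x"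
    using cc_cc[OF assms(1)] unfolding completely_contractive_def by (rule conjunct2)
  have T2: "\<forall>n\<ge>1. \<forall>x\<in>mats W n. mnorm Z n (matmap Z n T x) \<le> mnorm W n x"
    using cc_cc[OF assms(2)] unfolding completely_contractive_def by (rule conjunct2)
  have lin: "clinear_map X Z (T \<circ> S)" unfolding clinear_map_def
    using lin_carrier[OF S1] lin_carrier[OF T1] lin_add[OF S1] lin_add[OF T1]
      lin_smul[OF S1] lin_smul[OF T1] by simp
  have "mnorm Z n (matmap Z n (T \<circ> S) x) \<le> mnorm X n x" if "n \<ge> 1" "x \<in> mats X n" for n x
  proof -
    have mm: "matmap W n S x \<in> mats W n"
      using that(2) lin_carrier[OF S1] unfolding mats_def matmap_def by auto
    have "matmap Z n (T \<circ> S) x = matmap Z n T (matmap W n S x)"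
      unfolding matmap_def by (auto simp: fun_eq_iff)
    moreover have "mnorm Z n (matmap Z n T (matmap W n S x)) \<le> mnorm W n (matmap W n S x)"
      using T2 that(1) mm by blast
    moreover have "mnorm W n (matmap W n S x) \<le> mnorm X n x" using S2 that by blast
    ultimately show ?thesis by simp
  qed
  moreover have "module_map A X Z (T \<circ> S)"
    using S3 T3 lin_carrier[OF S1] unfolding module_map_def by simp
  ultimately show ?thesis unfolding cc_module_map_def completely_contractive_def using lin by blast
qed

theorem proposition3p2:
  fixes A :: "'a opalg" and Y :: "('y, 'a) rmodule"
    and G :: "'i filter" and Ys :: "'i \<Rightarrow> ('z, 'a) rmodule"
    and \<phi> :: "'i \<Rightarrow> 'y \<Rightarrow> 'z" and \<psi> :: "'i \<Rightarrow> 'z \<Rightarrow> 'y"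
  assumes "operator_algebra A" and "approx_unital A"
    and "rmodule_over A Y"
    and "G \<noteq> bot"
    and "\<forall>i. rmodule_over A (Ys i) \<and> hilbertian A (Ys i)"
    and "\<forall>i. cc_module_map A Y (Ys i) (\<phi> i) \<and> cc_module_map A (Ys i) Y (\<psi> i)"
    and "\<forall>y\<in>carrier Y. \<forall>\<epsilon>>0. eventually (\<lambda>i. vnorm Y (vdiff Y (\<psi> i (\<phi> i y)) y) < \<epsilon>) G"
  shows "hilbertian A Y"
proof -
  define Good :: "'y set \<Rightarrow> real \<Rightarrow> (nat \<times> ('y \<Rightarrow> nat \<Rightarrow> 'a) \<times> ((nat \<Rightarrow> 'a) \<Rightarrow> 'y)) set" where
    "Good = (\<lambda>S \<epsilon>. {(n, f, g). n \<ge> 1 \<and> cc_module_map A Y (col_space A n) f \<and>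
        cc_module_map A (col_space A n) Y g \<and> (\<forall>y\<in>S. vnorm Y (vdiff Y (g (f y)) y) < \<epsilon>)})"
  define J where "J = {(S, \<epsilon>). finite S \<and> S \<subseteq> carrier Y \<and> (\<epsilon>::real) > 0}"
  define F where "F = (INF j\<in>J. principal (case_prod Good j))"
  have osY: "operator_space Y" by (rule rm_os[OF assms(3)])
  have cvY: "complex_vs Y" by (rule os_cvs[OF osY])
  have nonempty: "Good S \<epsilon> \<noteq> {}" if "finite S" "S \<subseteq> carrier Y" "\<epsilon> > 0" for S \<epsilon>
  proof -
    note SY = that(2)
    have "eventually (\<lambda>i. \<forall>y\<in>S. vnorm Y (vdiff Y (\<psi> i (\<phi> i y)) y) < \<epsilon>/2) G"
    proof (rule eventually_ball_finite[OF that(1)], intro ballI)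
      fix y assume "y \<in> S"
      then show "eventually (\<lambda>i. vnorm Y (vdiff Y (\<psi> i (\<phi> i y)) y) < \<epsilon>/2) G"
      proof -
        have "y \<in> carrier Y" using \<open>y \<in> S\<close> that(2) by auto
        moreover have "\<epsilon>/2 > 0" using that(3) by simp
        ultimately show ?thesis using assms(7) by blast
      qed
    qed
    then obtain i where i: "\<forall>y\<in>S. vnorm Y (vdiff Y (\<psi> i (\<phi> i y)) y) < \<epsilon>/2"
      using eventually_happens'[OF assms(4)] by blast
    have ccp: "cc_module_map A Y (Ys i) (\<phi> i)" and ccs: "cc_module_map A (Ys i) Y (\<psi> i)"
      using assms(6) by auto
    have linp: "clinear_map Y (Ys i) (\<phi> i)" and lins: "clinear_map (Ys i) Y (\<psi> i)"
      using cc_lin ccp ccs by blast+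
    have cvZ: "complex_vs (Ys i)" using os_cvs rm_os assms(5) by blast
    obtain H where H: "H \<noteq> bot"
      "eventually (\<lambda>(n, f, g). n \<ge> 1 \<and> cc_module_map A (Ys i) (col_space A n) f \<and>
                                  cc_module_map A (col_space A n) (Ys i) g) H"
      "\<forall>z\<in>carrier (Ys i). \<forall>\<epsilon>>0. eventually (\<lambda>(n, f, g). vnorm (Ys i) (vdiff (Ys i) (g (f z)) z) < \<epsilon>) H"
      using assms(5) unfolding hilbertian_def by blast
    have "eventually (\<lambda>(n, f, g). \<forall>y\<in>S. vnorm (Ys i) (vdiff (Ys i) (g (f (\<phi> i y))) (\<phi> i y)) < \<epsilon>/2) H"
    proof -
    have "eventually (\<lambda>t. \<forall>y\<in>S. (\<lambda>(n, f, g). vnorm (Ys i) (vdiff (Ys i) (g (f (\<phi> i y))) (\<phi> i y)) < \<epsilon>/2) t) H"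
    proof (rule eventually_ball_finite[OF that(1)], intro ballI)
      fix y assume "y \<in> S"
      have "\<phi> i y \<in> carrier (Ys i)" using \<open>y \<in> S\<close> that(2) lin_carrier[OF linp] by auto
      moreover have "\<epsilon>/2 > 0" using that(3) by simp
      ultimately show "eventually (\<lambda>(n, f, g). vnorm (Ys i) (vdiff (Ys i) (g (f (\<phi> i y))) (\<phi> i y)) < \<epsilon>/2) H"
        using H(3) by blast
    qed
    then show ?thesis by (rule eventually_mono) (auto split: prod.splits)
    qed
    with H(2) have "eventually (\<lambda>(n, f, g). (n \<ge> 1 \<and> cc_module_map A (Ys i) (col_space A n) f \<and>
                                  cc_module_map A (col_space A n) (Ys i) g) \<and>
        (\<forall>y\<in>S. vnorm (Ys i) (vdiff (Ys i) (g (f (\<phi> i y))) (\<phi> i y)) < \<epsilon>/2)) H"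
      by (rule eventually_mono[OF eventually_conj]) (auto split: prod.splits)
    from eventually_happens'[OF H(1) this] obtain t where t: "(\<lambda>(n, f, g). (n \<ge> 1 \<and> cc_module_map A (Ys i) (col_space A n) f \<and>
                                  cc_module_map A (col_space A n) (Ys i) g) \<and>
        (\<forall>y\<in>S. vnorm (Ys i) (vdiff (Ys i) (g (f (\<phi> i y))) (\<phi> i y)) < \<epsilon>/2)) t" by blast
    obtain n f g where tn: "t = (n, f, g)" by (cases t) auto
    have ng: "n \<ge> 1" and f: "cc_module_map A (Ys i) (col_space A n) f"
      and g: "cc_module_map A (col_space A n) (Ys i) g"
      and err: "\<forall>y\<in>S. vnorm (Ys i) (vdiff (Ys i) (g (f (\<phi> i y))) (\<phi> i y)) < \<epsilon>/2"
      using t unfolding tn by simp_all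
    have c1: "cc_module_map A Y (col_space A n) (f \<circ> \<phi> i)" by (rule cc_comp[OF ccp f])
    have c2: "cc_module_map A (col_space A n) Y (\<psi> i \<circ> g)" by (rule cc_comp[OF g ccs])
    have "vnorm Y (vdiff Y ((\<psi> i \<circ> g) ((f \<circ> \<phi> i) y)) y) < \<epsilon>" if y: "y \<in> S" for y
    proof -
      have yc: "y \<in> carrier Y" using y SY by auto
      let ?z = "\<phi> i y" let ?w = "g (f ?z)"
      have zc: "?z \<in> carrier (Ys i)" by (rule lin_carrier[OF linp yc])
      have wc: "?w \<in> carrier (Ys i)" by (rule cc_carrier[OF g cc_carrier[OF f zc]])
      have dc: "vdiff (Ys i) ?w ?z \<in> carrier (Ys i)" using vdiff_closed[OF cvZ wc zc] .
      have pw: "\<psi> i ?w \<in> carrier Y" and pz: "\<psi> i ?z \<in> carrier Y"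
        using lin_carrier[OF lins] wc zc by auto
      have mz: "smul (Ys i) (-1) ?z \<in> carrier (Ys i)" by (rule smul_closed[OF cvZ zc])
      have l1: "\<forall>x\<in>carrier (Ys i). \<forall>y\<in>carrier (Ys i). \<psi> i (vadd (Ys i) x y) = vadd Y (\<psi> i x) (\<psi> i y)"
        and l2: "\<forall>c. \<forall>x\<in>carrier (Ys i). \<psi> i (smul (Ys i) c x) = smul Y c (\<psi> i x)"
        using lin_add[OF lins] lin_smul[OF lins] by blast+
      have lin_d: "\<psi> i (vdiff (Ys i) ?w ?z) = vdiff Y (\<psi> i ?w) (\<psi> i ?z)"
        unfolding vdiff_def using l1 l2 wc zc mz by simp
      have eq: "vdiff Y (\<psi> i ?w) y = vadd Y (\<psi> i (vdiff (Ys i) ?w ?z)) (vdiff Y (\<psi> i ?z) y)"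
        using diff_split[OF cvY pw pz yc] lin_d by simp
      have d1: "\<psi> i (vdiff (Ys i) ?w ?z) \<in> carrier Y" by (rule lin_carrier[OF lins dc])
      have d2: "vdiff Y (\<psi> i ?z) y \<in> carrier Y" using vdiff_closed[OF cvY pz yc] .
      have "vnorm Y (vdiff Y (\<psi> i ?w) y) \<le> vnorm Y (\<psi> i (vdiff (Ys i) ?w ?z)) + vnorm Y (vdiff Y (\<psi> i ?z) y)"
        unfolding eq by (rule vnorm_triangle[OF osY d1 d2])
      also have "vnorm Y (\<psi> i (vdiff (Ys i) ?w ?z)) \<le> vnorm (Ys i) (vdiff (Ys i) ?w ?z)"
        by (rule cc_vnorm[OF cc_cc[OF ccs] dc])
      finally have "vnorm Y (vdiff Y (\<psi> i ?w) y) \<le> vnorm (Ys i) (vdiff (Ys i) ?w ?z) + vnorm Y (vdiff Y (\<psi> i ?z) y)"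
        by simp
      moreover have "vnorm (Ys i) (vdiff (Ys i) ?w ?z) < \<epsilon>/2" using err y by blast
      moreover have "vnorm Y (vdiff Y (\<psi> i ?z) y) < \<epsilon>/2" using i y by blast
      ultimately show ?thesis by simp
    qed
    then have "(n, f \<circ> \<phi> i, \<psi> i \<circ> g) \<in> Good S \<epsilon>" unfolding Good_def using ng c1 c2 by auto
    then show ?thesis by blast
  qed
  have Jne: "J \<noteq> {}" proof -
    have "({}, 1) \<in> J" unfolding J_def by simp
    then show ?thesis by blast
  qed
  have dir: "\<exists>x\<in>J. principal (case_prod Good x) \<le> inf (principal (case_prod Good a)) (principal (case_prod Good b))"
    if "a \<in> J" "b \<in> J" for a b
  proof -
    obtain S1 e1 S2 e2 where ab: "a = (S1, e1)" "b = (S2, e2)" by fastforce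
    have "(S1 \<union> S2, min e1 e2) \<in> J" using that ab unfolding J_def by auto
    moreover have "Good (S1 \<union> S2) (min e1 e2) \<subseteq> Good S1 e1 \<inter> Good S2 e2"
      unfolding Good_def by auto
    ultimately show ?thesis using ab by (intro bexI[of _ "(S1 \<union> S2, min e1 e2)"]) (auto simp: inf_principal)
  qed
  have ev: "eventually P F \<longleftrightarrow> (\<exists>j\<in>J. eventually P (principal (case_prod Good j)))" for P
    unfolding F_def by (rule eventually_INF_base[OF Jne dir])
  have "F \<noteq> bot"
  proof
    assume "F = bot"
    then have "eventually (\<lambda>_. False) F" by simp
    then obtain j where j: "j \<in> J" "\<forall>t\<in>case_prod Good j. False"
      unfolding ev eventually_principal by blast
    obtain S e where Se: "j = (S, e)" by fastforce
    have "Good S e = {}" using j(2) Se by auto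
    then show False using nonempty j(1) Se unfolding J_def by auto
  qed
  moreover have "eventually (\<lambda>(n, \<phi>, \<psi>). n \<ge> 1 \<and> cc_module_map A Y (col_space A n) \<phi> \<and>
                                  cc_module_map A (col_space A n) Y \<psi>) F"
    unfolding ev eventually_principal J_def Good_def
    by (intro bexI[of _ "({}, 1)"]) auto
  moreover have "\<forall>y\<in>carrier Y. \<forall>\<epsilon>>0. eventually (\<lambda>(n, \<phi>, \<psi>). vnorm Y (vdiff Y (\<psi> (\<phi> y)) y) < \<epsilon>) F"
  proof (intro ballI allI impI)
    fix y and e :: real assume "y \<in> carrier Y" "e > 0"
    then show "eventually (\<lambda>(n, \<phi>, \<psi>). vnorm Y (vdiff Y (\<psi> (\<phi> y)) y) < e) F"
      unfolding ev eventually_principal J_def Good_def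
      by (intro bexI[of _ "({y}, e)"]) auto
  qed
  ultimately show ?thesis unfolding hilbertian_def by (intro exI[of _ F] conjI)
qed

end
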